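(* Let $(A(t))_{t\in\mathbb{N}_0}$ be a sequence of row-stochastic matrices in $\mathbb{R}_{\ge 0}^{n\times n}$ such that: (i) every $A(t)$ has strictly positive diagonal entries; (ii) for every $t$ and all $i,j$, $A(t)_{ij}>0\iff A(t)_{ji}>0$; (iii) there is $\delta>0$ such that for every $t$ every positive entry of $A(t)$ is greater than $\delta$. For $t_0<t_1$ let $A(t_0,t_1):=A(t_1-1)A(t_1-2)\cdots A(t_0)$. Then for every two time steps $t_0<t_1$, the lowest positive entry of $A(t_0,t_1)$ is greater than $\delta^{n^2-n+2}$. *)

theory Defs
  imports "HOL-Analysis.Analysis"
begin

definition row_stochastic :: "real^'n^'n \<Rightarrow> bool" where
  "row_stochastic M \<longleftrightarrow> (\<forall>i j. M $ i $ j \<ge> 0) \<and> (\<forall>i. (\<Sum>j\<in>UNIV. M $ i $ j) = 1)"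

fun mat_prod_from :: "(nat \<Rightarrow> real^'n^'n) \<Rightarrow> nat \<Rightarrow> nat \<Rightarrow> real^'n^'n" where
  "mat_prod_from A t0 0 = mat 1"
| "mat_prod_from A t0 (Suc k) = A (t0 + k) ** mat_prod_from A t0 k"

definition trans_mat :: "(nat \<Rightarrow> real^'n^'n) \<Rightarrow> nat \<Rightarrow> nat \<Rightarrow> real^'n^'n" where
  "trans_mat A t0 t1 = mat_prod_from A t0 (t1 - t0)"

end

theory Submission
  imports Defs
begin

lemma mpf_nonneg:
  assumes stoch: "\<And>t. row_stochastic (A t)"
  shows "mat_prod_from A t0 k $ i $ j \<ge> 0"
proof (induction k arbitrary: i)
  case 0 then show ?case by (simp add: mat_def)
next
  case (Suc k)
  show ?case using stoch Suc
    by (auto simp: matrix_matrix_mult_def row_stochastic_def intro!: sum_nonneg)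
qed

lemma mpf_suc_ge:
  assumes stoch: "\<And>t. row_stochastic (A t)"
  shows "mat_prod_from A t0 (Suc k) $ i $ j \<ge> A (t0+k) $ i $ l * mat_prod_from A t0 k $ l $ j"
proof -
  have "mat_prod_from A t0 (Suc k) $ i $ j = (\<Sum>m\<in>UNIV. A (t0+k) $ i $ m * mat_prod_from A t0 k $ m $ j)"
    by (simp add: matrix_matrix_mult_def)
  also have "\<dots> \<ge> A (t0+k) $ i $ l * mat_prod_from A t0 k $ l $ j"
    by (rule member_le_sum) (use stoch mpf_nonneg[of A, OF stoch] in \<open>auto simp: row_stochastic_def\<close>)
  finally show ?thesis .
qed

lemma invariant:
  fixes A :: "nat \<Rightarrow> real^'n^'n" and \<delta> :: real
  assumes stoch: "\<And>t. row_stochastic (A t)"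
    and diag: "\<And>t i. A t $ i $ i > 0"
    and symm: "\<And>t i j. A t $ i $ j > 0 \<longleftrightarrow> A t $ j $ i > 0"
    and delta_pos: "\<delta> > 0" and delta_le: "\<delta> \<le> 1"
    and delta_bound: "\<And>t i j. A t $ i $ j > 0 \<Longrightarrow> A t $ i $ j > \<delta>"
  shows "mat_prod_from A u k $ i $ j > 0 \<Longrightarrow>
     mat_prod_from A u k $ i $ j \<ge> \<delta> ^ (card {i. mat_prod_from A u k $ i $ j > 0} - 1)"
proof (induction k arbitrary: i)
  case 0
  then show ?case by (auto simp: mat_def split: if_splits)
next
  case (Suc k)
  let ?P = "mat_prod_from A u"
  let ?B = "A (u+k)"
  define S where "S = {i. ?P k $ i $ j > 0}"
  define S' where "S' = {i. ?P (Suc k) $ i $ j > 0}"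
  define m where "m = \<delta> ^ (card S - 1)"
  have nn: "\<And>k i. ?P k $ i $ j \<ge> 0" using mpf_nonneg[of A, OF stoch] by blast
  have Bnn: "\<And>i l. ?B $ i $ l \<ge> 0" using stoch by (auto simp: row_stochastic_def)
  have rows: "\<And>i. (\<Sum>l\<in>UNIV. ?B $ i $ l) = 1" using stoch by (auto simp: row_stochastic_def)
  have ge: "\<And>i l. ?P (Suc k) $ i $ j \<ge> ?B $ i $ l * ?P k $ l $ j"
    using mpf_suc_ge[of A, OF stoch] by blast
  have sub: "S \<subseteq> S'"
  proof
    fix x assume "x \<in> S"
    then have "?B $ x $ x * ?P k $ x $ j > 0" using diag by (auto simp: S_def)
    then show "x \<in> S'" using ge[of x x] by (auto simp: S'_def)
  qed
  have diagP: "\<And>k. ?P k $ j $ j > 0"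
  proof -
    fix k show "?P k $ j $ j > 0"
    proof (induction k)
      case 0 then show ?case by (simp add: mat_def)
    next
      case (Suc k)
      have "A (u+k) $ j $ j * ?P k $ j $ j > 0" using diag Suc by simp
      then show ?case using mpf_suc_ge[of A, OF stoch, of u k j j j] by linarith
    qed
  qed
  have mS: "\<And>l. l \<in> S \<Longrightarrow> ?P k $ l $ j \<ge> m" using Suc.IH by (auto simp: S_def m_def)
  have eq: "?P (Suc k) $ i $ j = (\<Sum>l\<in>UNIV. ?B $ i $ l * ?P k $ l $ j)"
    by (simp add: matrix_matrix_mult_def)
  have iS': "i \<in> S'" using Suc.prems by (auto simp: S'_def)
  show ?case
  proof (cases "S' = S")
    case True
    have "\<And>l. ?B $ i $ l * ?P k $ l $ j \<ge> ?B $ i $ l * m"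
    proof -
      fix l
      show "?B $ i $ l * ?P k $ l $ j \<ge> ?B $ i $ l * m"
      proof (cases "?B $ i $ l > 0")
        case True
        then have "?B $ l $ i > 0" using symm by blast
        moreover have "i \<in> S" using iS' \<open>S' = S\<close> by simp
        ultimately have "?B $ l $ i * ?P k $ i $ j > 0" by (auto simp: S_def)
        then have "l \<in> S'" using ge[of l i] by (auto simp: S'_def)
        then have "l \<in> S" using \<open>S' = S\<close> by simp
        then show ?thesis using mS[of l] True by (simp add: mult_left_mono)
      next
        case False
        then have "?B $ i $ l = 0" using Bnn[of i l] by linarith
        then show ?thesis by simp
      qed
    qed
    then have "(\<Sum>l\<in>UNIV. ?B $ i $ l * m) \<le> ?P (Suc k) $ i $ j"
      unfolding eq by (rule sum_mono)
    moreover have "(\<Sum>l\<in>UNIV. ?B $ i $ l * m) = m"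
      using rows[of i] by (simp add: sum_distrib_right[symmetric])
    ultimately show ?thesis using True by (simp add: S'_def S_def m_def)
  next
    case False
    have fin: "finite S'" by simp
    have fin0: "finite S" by simp
    have jj: "?P k $ j $ j > 0" using diagP by blast
    have "card S < card S'" using sub False fin by (simp add: psubset_card_mono psubset_eq)
    have jS: "j \<in> S" using jj by (simp add: S_def)
    have "card S > 0" using jS fin0 by (auto simp: card_gt_0_iff)
    then have cS: "card S \<ge> 1" by simp
    have le: "\<delta> * m \<ge> \<delta> ^ (card S' - 1)"
    proof -
      have "\<delta> * m = \<delta> ^ (card S)" unfolding m_def using cS
        by (simp add: power_Suc[symmetric])
      also have "\<dots> \<ge> \<delta> ^ (card S' - 1)"
        using \<open>card S < card S'\<close> delta_pos delta_le by (intro power_decreasing) auto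
      finally show ?thesis .
    qed
    obtain l where l: "?B $ i $ l * ?P k $ l $ j > 0"
    proof (rule ccontr)
      assume "\<not> thesis"
      then have "\<And>l. ?B $ i $ l * ?P k $ l $ j \<le> 0" using that not_less by blast
      then have "?P (Suc k) $ i $ j \<le> 0" unfolding eq by (simp add: sum_nonpos)
      then show False using Suc.prems by simp
    qed
    then have Bp: "?B $ i $ l > 0" and Pp: "?P k $ l $ j > 0"
      using Bnn[of i l] nn[of k l] by (auto simp: zero_less_mult_iff)
    have "?B $ i $ l \<ge> \<delta>" using delta_bound Bp by (simp add: less_imp_le)
    moreover have "?P k $ l $ j \<ge> m" using mS Pp by (simp add: S_def)
    ultimately have "?B $ i $ l * ?P k $ l $ j \<ge> \<delta> * m"
      using delta_pos by (intro mult_mono) (auto simp: m_def)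
    then show ?thesis using ge[of i l] le by (simp add: S'_def)
  qed
qed

theorem proposition2:
  fixes A :: "nat \<Rightarrow> real^'n^'n" and \<delta> :: real
  assumes stoch: "\<And>t. row_stochastic (A t)"
    and diag: "\<And>t i. A t $ i $ i > 0"
    and symm: "\<And>t i j. A t $ i $ j > 0 \<longleftrightarrow> A t $ j $ i > 0"
    and delta_pos: "\<delta> > 0"
    and delta_bound: "\<And>t i j. A t $ i $ j > 0 \<Longrightarrow> A t $ i $ j > \<delta>"
    and t01: "t0 < t1"
  shows "\<forall>i j. trans_mat A t0 t1 $ i $ j > 0 \<longrightarrow>
           trans_mat A t0 t1 $ i $ j > \<delta> ^ (CARD('n)^2 - CARD('n) + 2)"
proof (intro allI impI)
  fix i j
  assume pos: "trans_mat A t0 t1 $ i $ j > 0"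
  obtain a where a: "a = (undefined :: 'n)" by simp
  have "A 0 $ a $ a \<le> (\<Sum>l\<in>UNIV. A 0 $ a $ l)"
    by (rule member_le_sum) (use stoch in \<open>auto simp: row_stochastic_def\<close>)
  then have "A 0 $ a $ a \<le> 1" using stoch by (simp add: row_stochastic_def)
  then have d1: "\<delta> < 1" using delta_bound[of 0 a a] diag[of 0 a] by linarith
  let ?S = "{i. trans_mat A t0 t1 $ i $ j > 0}"
  have "trans_mat A t0 t1 $ i $ j \<ge> \<delta> ^ (card ?S - 1)"
    using invariant[where A=A and \<delta>=\<delta> and u=t0 and k="t1 - t0" and i=i and j=j, OF stoch diag symm delta_pos _ delta_bound] pos d1
    by (simp add: trans_mat_def)
  moreover have "\<delta> ^ (card ?S - 1) \<ge> \<delta> ^ (CARD('n) - 1)"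
    using delta_pos d1 by (intro power_decreasing) (auto simp: card_mono diff_le_mono)
  moreover have "\<delta> ^ (CARD('n) - 1) > \<delta> ^ (CARD('n)^2 - CARD('n) + 2)"
  proof (rule power_strict_decreasing)
    have "CARD('n) \<le> CARD('n) * CARD('n)" by (rule le_square)
    then have "CARD('n) - 1 < CARD('n) * CARD('n) - CARD('n) + 2"
      by (cases "CARD('n)") (simp_all add: algebra_simps)
    then show "CARD('n) - 1 < CARD('n)^2 - CARD('n) + 2" by (simp add: power2_eq_square)
  qed (use delta_pos d1 in auto)
  ultimately show "trans_mat A t0 t1 $ i $ j > \<delta> ^ (CARD('n)^2 - CARD('n) + 2)" by linarith
qed

end
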